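(* Let $(X,\mathsf{d}_X)$ be a compact metric space and $\mathfrak{A}=\bigoplus_{k=0}^n M_{m_k}(\mathbb{C})$ with $n\in\mathbb{N}$, $m_k\ge1$. Let $\mu$ be a state of $\mathfrak{A}$, and define $\Delta^{\mathfrak{A}}_\mu:X\to\mathscr{S}(C(X,\mathfrak{A}))$ by $\Delta^{\mathfrak{A}}_\mu(x)=\mu_x$, where $\mu_x(a)=\mu(a(x))$. Then $\Delta^{\mathfrak{A}}_\mu$ is a homeomorphism onto its image for the weak* topology. Furthermore, if $\|\cdot\|_{\mathsf{n}}$ is a norm on $\mathfrak{A}$ (over $\mathbb{R}$ or $\mathbb{C}$) and $M,N>0$ with $M\|\cdot\|_{\mathsf{n}}\le\|\cdot\|_{\mathfrak{A}}\le N\|\cdot\|_{\mathsf{n}}$, then for every $q\in\{C(X),\mathbb{C}\}\cup\mathscr{S}(C(X,\mathfrak{A}))$ and all $x,y\in X$, $$\mathrm{mk}_{\mathsf{L}^{(\mathsf{n}),q}_{\mathsf{d}_X}}(\Delta^{\mathfrak{A}}_\mu(x),\Delta^{\mathfrak{A}}_\mu(y))\le N\,k^{\mathfrak{A}}_\mu\,\mathsf{d}_X(x,y),$$ so $\Delta^{\mathfrak{A}}_\mu$ is $N k^{\mathfrak{A}}_\mu$-Lipschitz.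
   Context: $e_{k,(p,q)}\in\mathfrak{A}$ denotes the matrix unit that is $1$ in row $p$, column $q$ of the $k$-th summand and $0$ elsewhere, and $k^{\mathfrak{A}}_\mu=\sum_{k=0}^n\sum_{p,q=1}^{m_k}|\mu(e_{k,(p,q)})|$. $C(X,\mathfrak{A})$: continuous $\mathfrak{A}$-valued functions with supremum norm; $\mathscr{S}(\cdot)$: state space; $C(X,\mathbb{C}1_{\mathfrak{A}})$: $\mathbb{C}1_{\mathfrak{A}}$-valued functions. $l^{(\mathsf{n})}_{\mathsf{d}_X}(a)=\sup_{x\ne y}\|a(x)-a(y)\|_{\mathsf{n}}/\mathsf{d}_X(x,y)$; $\mathsf{L}^{(\mathsf{n}),C(X)}_{\mathsf{d}_X}(a)=\max\{l^{(\mathsf{n})}_{\mathsf{d}_X}(a),\inf_{b\in C(X,\mathbb{C}1_{\mathfrak{A}})}\|a-b\|\}$, $\mathsf{L}^{(\mathsf{n}),\mathbb{C}}_{\mathsf{d}_X}(a)=\max\{l^{(\mathsf{n})}_{\mathsf{d}_X}(a),\inf_{\lambda\in\mathbb{C}}\|a-\lambda1\|\}$, and for a state $\nu$ of $C(X,\mathfrak{A})$, $\mathsf{L}^{(\mathsf{n}),\nu}_{\mathsf{d}_X}(a)=\max\{l^{(\mathsf{n})}_{\mathsf{d}_X}(a),\|a-\nu(a)1\|\}$. $\mathrm{mk}_{\mathsf{L}}(\varphi,\psi)=\sup\{|\varphi(a)-\psi(a)|: a=a^*,\ \mathsf{L}(a)\le1\}$. *)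

theory Defs
  imports "HOL-Analysis.Analysis"
begin

text \<open>An element of A is represented by its matrix entries a k p q (summand k, row p, column q),
  with indices 0 \<le> k \<le> n and 0 \<le> p, q < m k; all other entries are 0.\<close>

type_synonym alg = "nat \<Rightarrow> nat \<Rightarrow> nat \<Rightarrow> complex"

definition alg_carrier :: "nat \<Rightarrow> (nat \<Rightarrow> nat) \<Rightarrow> alg set" where
  "alg_carrier n m = {a. \<forall>k p q. \<not> (k \<le> n \<and> p < m k \<and> q < m k) \<longrightarrow> a k p q = 0}"

definition alg_zero :: alg where
  "alg_zero = (\<lambda>k p q. 0)"

definition alg_add :: "alg \<Rightarrow> alg \<Rightarrow> alg" where
  "alg_add a b = (\<lambda>k p q. a k p q + b k p q)"

definition alg_sub :: "alg \<Rightarrow> alg \<Rightarrow> alg" where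
  "alg_sub a b = (\<lambda>k p q. a k p q - b k p q)"

definition alg_scale :: "complex \<Rightarrow> alg \<Rightarrow> alg" where
  "alg_scale c a = (\<lambda>k p q. c * a k p q)"

definition alg_mult :: "(nat \<Rightarrow> nat) \<Rightarrow> alg \<Rightarrow> alg \<Rightarrow> alg" where
  "alg_mult m a b = (\<lambda>k p q. \<Sum>r<m k. a k p r * b k r q)"

definition alg_star :: "alg \<Rightarrow> alg" where
  "alg_star a = (\<lambda>k p q. cnj (a k q p))"

definition alg_one :: "nat \<Rightarrow> (nat \<Rightarrow> nat) \<Rightarrow> alg" where
  "alg_one n m = (\<lambda>k p q. if k \<le> n \<and> p < m k \<and> q = p then 1 else 0)"

definition alg_unit :: "nat \<Rightarrow> nat \<Rightarrow> nat \<Rightarrow> alg" where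
  "alg_unit k p q = (\<lambda>k' p' q'. if k' = k \<and> p' = p \<and> q' = q then 1 else 0)"

definition mat_opnorm :: "nat \<Rightarrow> (nat \<Rightarrow> nat \<Rightarrow> complex) \<Rightarrow> real" where
  "mat_opnorm d A = Sup {sqrt (\<Sum>p<d. (cmod (\<Sum>q<d. A p q * v q))\<^sup>2) | v.
                          (\<Sum>q<d. (cmod (v q))\<^sup>2) \<le> 1}"

definition alg_norm :: "nat \<Rightarrow> (nat \<Rightarrow> nat) \<Rightarrow> alg \<Rightarrow> real" where
  "alg_norm n m a = Max ((\<lambda>k. mat_opnorm (m k) (a k)) ` {..n})"

definition alg_state :: "nat \<Rightarrow> (nat \<Rightarrow> nat) \<Rightarrow> (alg \<Rightarrow> complex) \<Rightarrow> bool" where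
  "alg_state n m \<mu> \<longleftrightarrow>
     (\<forall>a\<in>alg_carrier n m. \<forall>b\<in>alg_carrier n m. \<mu> (alg_add a b) = \<mu> a + \<mu> b) \<and>
     (\<forall>c. \<forall>a\<in>alg_carrier n m. \<mu> (alg_scale c a) = c * \<mu> a) \<and>
     (\<forall>a\<in>alg_carrier n m. \<mu> (alg_mult m (alg_star a) a) \<in> \<real> \<and>
                           0 \<le> Re (\<mu> (alg_mult m (alg_star a) a))) \<and>
     \<mu> (alg_one n m) = 1"

definition kmu :: "nat \<Rightarrow> (nat \<Rightarrow> nat) \<Rightarrow> (alg \<Rightarrow> complex) \<Rightarrow> real" where
  "kmu n m \<mu> = (\<Sum>k\<le>n. \<Sum>p<m k. \<Sum>q<m k. cmod (\<mu> (alg_unit k p q)))"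

text \<open>A (real or complex) norm on A (every complex norm is in particular a real norm).\<close>
definition is_norm_on :: "nat \<Rightarrow> (nat \<Rightarrow> nat) \<Rightarrow> (alg \<Rightarrow> real) \<Rightarrow> bool" where
  "is_norm_on n m nn \<longleftrightarrow>
     (\<forall>a\<in>alg_carrier n m. nn a = 0 \<longleftrightarrow> a = alg_zero) \<and>
     (\<forall>r::real. \<forall>a\<in>alg_carrier n m. nn (alg_scale (complex_of_real r) a) = \<bar>r\<bar> * nn a) \<and>
     (\<forall>a\<in>alg_carrier n m. \<forall>b\<in>alg_carrier n m. nn (alg_add a b) \<le> nn a + nn b)"

definition CXA :: "'x metric \<Rightarrow> nat \<Rightarrow> (nat \<Rightarrow> nat) \<Rightarrow> ('x \<Rightarrow> alg) set" where
  "CXA mX n m = {a. (\<forall>x\<in>mspace mX. a x \<in> alg_carrier n m) \<and>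
                    (\<forall>x. x \<notin> mspace mX \<longrightarrow> a x = alg_zero) \<and>
                    (\<forall>x\<in>mspace mX. \<forall>e>0. \<exists>\<delta>>0. \<forall>y\<in>mspace mX.
                        mdist mX x y < \<delta> \<longrightarrow> alg_norm n m (alg_sub (a y) (a x)) < e)}"

definition fadd :: "('x \<Rightarrow> alg) \<Rightarrow> ('x \<Rightarrow> alg) \<Rightarrow> 'x \<Rightarrow> alg" where
  "fadd a b = (\<lambda>x. alg_add (a x) (b x))"

definition fsub :: "('x \<Rightarrow> alg) \<Rightarrow> ('x \<Rightarrow> alg) \<Rightarrow> 'x \<Rightarrow> alg" where
  "fsub a b = (\<lambda>x. alg_sub (a x) (b x))"

definition fscale :: "complex \<Rightarrow> ('x \<Rightarrow> alg) \<Rightarrow> 'x \<Rightarrow> alg" where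
  "fscale c a = (\<lambda>x. alg_scale c (a x))"

definition fmult :: "(nat \<Rightarrow> nat) \<Rightarrow> ('x \<Rightarrow> alg) \<Rightarrow> ('x \<Rightarrow> alg) \<Rightarrow> 'x \<Rightarrow> alg" where
  "fmult m a b = (\<lambda>x. alg_mult m (a x) (b x))"

definition fstar :: "('x \<Rightarrow> alg) \<Rightarrow> 'x \<Rightarrow> alg" where
  "fstar a = (\<lambda>x. alg_star (a x))"

definition fone :: "'x metric \<Rightarrow> nat \<Rightarrow> (nat \<Rightarrow> nat) \<Rightarrow> 'x \<Rightarrow> alg" where
  "fone mX n m = (\<lambda>x. if x \<in> mspace mX then alg_one n m else alg_zero)"

text \<open>Supremum norm (0 if X is empty).\<close>
definition sup_norm :: "'x metric \<Rightarrow> nat \<Rightarrow> (nat \<Rightarrow> nat) \<Rightarrow> ('x \<Rightarrow> alg) \<Rightarrow> real" where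
  "sup_norm mX n m a = Sup (insert 0 ((\<lambda>x. alg_norm n m (a x)) ` mspace mX))"

text \<open>States of C(X,A); they are taken to vanish outside C(X,A) (functionals on C(X,A)).\<close>
definition cx_state :: "'x metric \<Rightarrow> nat \<Rightarrow> (nat \<Rightarrow> nat) \<Rightarrow> (('x \<Rightarrow> alg) \<Rightarrow> complex) \<Rightarrow> bool" where
  "cx_state mX n m \<nu> \<longleftrightarrow>
     (\<forall>a\<in>CXA mX n m. \<forall>b\<in>CXA mX n m. \<nu> (fadd a b) = \<nu> a + \<nu> b) \<and>
     (\<forall>c. \<forall>a\<in>CXA mX n m. \<nu> (fscale c a) = c * \<nu> a) \<and>
     (\<forall>a\<in>CXA mX n m. \<nu> (fmult m (fstar a) a) \<in> \<real> \<and> 0 \<le> Re (\<nu> (fmult m (fstar a) a))) \<and>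
     \<nu> (fone mX n m) = 1 \<and>
     (\<forall>a. a \<notin> CXA mX n m \<longrightarrow> \<nu> a = 0)"

definition weakstar :: "'x metric \<Rightarrow> nat \<Rightarrow> (nat \<Rightarrow> nat) \<Rightarrow> (('x \<Rightarrow> alg) \<Rightarrow> complex) topology" where
  "weakstar mX n m = topology_generated_by
     {{\<nu>. cx_state mX n m \<nu> \<and> \<nu> a \<in> U} | a U. a \<in> CXA mX n m \<and> open U}"

definition Delta :: "'x metric \<Rightarrow> nat \<Rightarrow> (nat \<Rightarrow> nat) \<Rightarrow> (alg \<Rightarrow> complex) \<Rightarrow> 'x \<Rightarrow> ('x \<Rightarrow> alg) \<Rightarrow> complex" where
  "Delta mX n m \<mu> x = (\<lambda>a. if a \<in> CXA mX n m then \<mu> (a x) else 0)"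

definition lipc :: "'x metric \<Rightarrow> (alg \<Rightarrow> real) \<Rightarrow> ('x \<Rightarrow> alg) \<Rightarrow> ereal" where
  "lipc mX nn a = (SUP xy\<in>{(x, y). x \<in> mspace mX \<and> y \<in> mspace mX \<and> x \<noteq> y}.
                     ereal (nn (alg_sub (a (fst xy)) (a (snd xy))) / mdist mX (fst xy) (snd xy)))"

definition L_CX :: "'x metric \<Rightarrow> nat \<Rightarrow> (nat \<Rightarrow> nat) \<Rightarrow> (alg \<Rightarrow> real) \<Rightarrow> ('x \<Rightarrow> alg) \<Rightarrow> ereal" where
  "L_CX mX n m nn a = max (lipc mX nn a)
     (ereal (Inf {sup_norm mX n m (fsub a b) | b. b \<in> CXA mX n m \<and>
                    (\<forall>x\<in>mspace mX. \<exists>c. b x = alg_scale c (alg_one n m))}))"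

definition L_C :: "'x metric \<Rightarrow> nat \<Rightarrow> (nat \<Rightarrow> nat) \<Rightarrow> (alg \<Rightarrow> real) \<Rightarrow> ('x \<Rightarrow> alg) \<Rightarrow> ereal" where
  "L_C mX n m nn a = max (lipc mX nn a)
     (ereal (Inf {sup_norm mX n m (fsub a (fscale c (fone mX n m))) | c. True}))"

definition L_st :: "'x metric \<Rightarrow> nat \<Rightarrow> (nat \<Rightarrow> nat) \<Rightarrow> (alg \<Rightarrow> real) \<Rightarrow> (('x \<Rightarrow> alg) \<Rightarrow> complex)
                    \<Rightarrow> ('x \<Rightarrow> alg) \<Rightarrow> ereal" where
  "L_st mX n m nn \<nu> a = max (lipc mX nn a)
     (ereal (sup_norm mX n m (fsub a (fscale (\<nu> a) (fone mX n m)))))"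

definition mk :: "'x metric \<Rightarrow> nat \<Rightarrow> (nat \<Rightarrow> nat) \<Rightarrow> (('x \<Rightarrow> alg) \<Rightarrow> ereal)
                  \<Rightarrow> (('x \<Rightarrow> alg) \<Rightarrow> complex) \<Rightarrow> (('x \<Rightarrow> alg) \<Rightarrow> complex) \<Rightarrow> ereal" where
  "mk mX n m L \<phi> \<psi> = Sup {ereal (cmod (\<phi> a - \<psi> a)) | a.
                             a \<in> CXA mX n m \<and> fstar a = a \<and> L a \<le> 1}"

end

theory Submission
  imports Defs
begin


definition Sn :: "nat \<Rightarrow> (nat \<Rightarrow> nat) \<Rightarrow> alg \<Rightarrow> real" where
  "Sn n m b = (\<Sum>k\<le>n. \<Sum>p<m k. \<Sum>q<m k. cmod (b k p q))"

definition Kc :: "nat \<Rightarrow> (nat \<Rightarrow> nat) \<Rightarrow> real" where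
  "Kc n m = (\<Sum>k\<le>n. \<Sum>p<m k. \<Sum>q<m k. (1::real))"

lemma opnorm_elem_le:
  fixes d :: nat
  assumes "(\<Sum>q<d. (cmod (v q))\<^sup>2) \<le> 1"
  shows "sqrt (\<Sum>p<d. (cmod (\<Sum>q<d. A p q * v q))\<^sup>2) \<le> (\<Sum>p<d. \<Sum>q<d. cmod (A p q))"
proof -
  have vq: "cmod (v q) \<le> 1" if "q < d" for q
  proof -
    have "(cmod (v q))\<^sup>2 \<le> (\<Sum>q<d. (cmod (v q))\<^sup>2)"
      using that by (intro member_le_sum) auto
    then have "(cmod (v q))\<^sup>2 \<le> 1" using assms by linarith
    then show ?thesis by (simp add: power_le_one_iff)
  qed
  have "sqrt (\<Sum>p<d. (cmod (\<Sum>q<d. A p q * v q))\<^sup>2) = L2_set (\<lambda>p. cmod (\<Sum>q<d. A p q * v q)) {..<d}"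
    by (simp add: L2_set_def)
  also have "\<dots> \<le> (\<Sum>p<d. cmod (\<Sum>q<d. A p q * v q))"
    by (rule L2_set_le_sum) auto
  also have "\<dots> \<le> (\<Sum>p<d. \<Sum>q<d. cmod (A p q))"
  proof (rule sum_mono)
    fix p assume "p \<in> {..<d}"
    have "cmod (\<Sum>q<d. A p q * v q) \<le> (\<Sum>q<d. cmod (A p q * v q))" by (rule norm_sum)
    also have "\<dots> \<le> (\<Sum>q<d. cmod (A p q))"
    proof (rule sum_mono)
      fix q assume "q \<in> {..<d}"
      then show "cmod (A p q * v q) \<le> cmod (A p q)"
        using vq[of q] by (simp add: norm_mult mult_left_le)
    qed
    finally show "cmod (\<Sum>q<d. A p q * v q) \<le> (\<Sum>q<d. cmod (A p q))" .
  qed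
  finally show ?thesis .
qed

lemma opnorm_bdd: fixes d :: nat shows "bdd_above {sqrt (\<Sum>p<d. (cmod (\<Sum>q<d. A p q * v q))\<^sup>2) | v.
                          (\<Sum>q<d. (cmod (v q))\<^sup>2) \<le> 1}"
  unfolding bdd_above_def using opnorm_elem_le by blast

lemma opnorm_zero_in: fixes d :: nat shows "0 \<in> {sqrt (\<Sum>p<d. (cmod (\<Sum>q<d. A p q * v q))\<^sup>2) | v.
                          (\<Sum>q<d. (cmod (v q))\<^sup>2) \<le> 1}"
  by (rule CollectI, rule exI[of _ "\<lambda>_. 0"]) simp

lemma opnorm_le_sum: "mat_opnorm d A \<le> (\<Sum>p<d. \<Sum>q<d. cmod (A p q))"
  unfolding mat_opnorm_def
proof (rule cSup_least)
  show "{sqrt (\<Sum>p<d. (cmod (\<Sum>q<d. A p q * v q))\<^sup>2) | v. (\<Sum>q<d. (cmod (v q))\<^sup>2) \<le> 1} \<noteq> {}"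
    using opnorm_zero_in by blast
qed (use opnorm_elem_le in auto)

lemma opnorm_nonneg: "0 \<le> mat_opnorm d A"
  unfolding mat_opnorm_def
  by (rule cSup_upper[OF opnorm_zero_in opnorm_bdd])

lemma entry_le_opnorm:
  assumes "p < d" "q < d"
  shows "cmod (A p q) \<le> mat_opnorm d A"
proof -
  define v where "v = (\<lambda>q'. if q' = q then (1::complex) else 0)"
  have "(\<Sum>q'<d. (cmod (v q'))\<^sup>2) = (\<Sum>q'<d. if q' = q then 1 else 0)"
    by (rule sum.cong) (auto simp: v_def)
  then have v1: "(\<Sum>q'<d. (cmod (v q'))\<^sup>2) \<le> 1"
    using assms by simp
  have s: "(\<Sum>q'<d. A p' q' * v q') = A p' q" for p'
  proof -
    have "(\<Sum>q'<d. A p' q' * v q') = (\<Sum>q'<d. if q' = q then A p' q else 0)"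
      by (rule sum.cong) (auto simp: v_def)
    then show ?thesis using assms by simp
  qed
  have "cmod (A p q) = sqrt ((cmod (A p q))\<^sup>2)" by simp
  also have "\<dots> \<le> sqrt (\<Sum>p'<d. (cmod (A p' q))\<^sup>2)"
    by (rule real_sqrt_le_mono, rule member_le_sum) (use assms in auto)
  also have "\<dots> = sqrt (\<Sum>p'<d. (cmod (\<Sum>q'<d. A p' q' * v q'))\<^sup>2)" by (simp add: s)
  also have "\<dots> \<le> mat_opnorm d A"
    unfolding mat_opnorm_def by (rule cSup_upper[OF _ opnorm_bdd]) (use v1 in blast)
  finally show ?thesis .
qed

lemma alg_norm_ge:
  assumes "k \<le> n" shows "mat_opnorm (m k) (b k) \<le> alg_norm n m b"
  unfolding alg_norm_def by (rule Max_ge) (use assms in auto)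

lemma alg_norm_nonneg: "0 \<le> alg_norm n m b"
  using alg_norm_ge[of 0 n m b] opnorm_nonneg[of "m 0" "b 0"] by linarith

lemma entry_le_alg_norm:
  assumes "k \<le> n" "p < m k" "q < m k"
  shows "cmod (b k p q) \<le> alg_norm n m b"
  using entry_le_opnorm[OF assms(2,3), of "b k"] alg_norm_ge[OF assms(1), of m b] by linarith

lemma alg_norm_le_Sn: "alg_norm n m b \<le> Sn n m b"
  unfolding alg_norm_def
proof (subst Max_le_iff, simp, simp, intro ballI)
  fix r assume "r \<in> (\<lambda>k. mat_opnorm (m k) (b k)) ` {..n}"
  then obtain k where k: "k \<le> n" "r = mat_opnorm (m k) (b k)" by auto
  have "r \<le> (\<Sum>p<m k. \<Sum>q<m k. cmod (b k p q))" using k opnorm_le_sum by simp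
  also have "\<dots> \<le> Sn n m b" unfolding Sn_def
    by (rule member_le_sum[where f = "\<lambda>k. \<Sum>p<m k. \<Sum>q<m k. cmod (b k p q)"])
       (use k in \<open>auto intro!: sum_nonneg\<close>)
  finally show "r \<le> Sn n m b" .
qed

lemma Sn_le_K: "Sn n m b \<le> Kc n m * alg_norm n m b"
proof -
  have "Sn n m b \<le> (\<Sum>k\<le>n. \<Sum>p<m k. \<Sum>q<m k. alg_norm n m b)"
    unfolding Sn_def by (intro sum_mono entry_le_alg_norm) auto
  also have "\<dots> = Kc n m * alg_norm n m b" unfolding Kc_def by (simp add: sum_distrib_right mult.assoc)
  finally show ?thesis .
qed

lemma Kc_nonneg: "0 \<le> Kc n m" unfolding Kc_def by (auto intro: sum_nonneg)

lemma Sn_add: "Sn n m (\<lambda>k p q. u k p q + w k p q) \<le> Sn n m u + Sn n m w"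
  unfolding Sn_def by (simp only: sum.distrib[symmetric]) (intro sum_mono norm_triangle_ineq)

lemma Sn_scale: "Sn n m (\<lambda>k p q. c * u k p q) = cmod c * Sn n m u"
  unfolding Sn_def by (simp add: norm_mult sum_distrib_left)



lemma carrier_add: "a \<in> alg_carrier n m \<Longrightarrow> b \<in> alg_carrier n m \<Longrightarrow> alg_add a b \<in> alg_carrier n m"
  by (simp add: alg_carrier_def alg_add_def)
lemma carrier_sub: "a \<in> alg_carrier n m \<Longrightarrow> b \<in> alg_carrier n m \<Longrightarrow> alg_sub a b \<in> alg_carrier n m"
  by (simp add: alg_carrier_def alg_sub_def)
lemma carrier_scale: "a \<in> alg_carrier n m \<Longrightarrow> alg_scale c a \<in> alg_carrier n m"
  by (simp add: alg_carrier_def alg_scale_def)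
lemma carrier_zero: "alg_zero \<in> alg_carrier n m"
  by (simp add: alg_carrier_def alg_zero_def)
lemma carrier_one: "alg_one n m \<in> alg_carrier n m"
  by (simp add: alg_carrier_def alg_one_def)
lemma carrier_unit: "k \<le> n \<Longrightarrow> p < m k \<Longrightarrow> q < m k \<Longrightarrow> alg_unit k p q \<in> alg_carrier n m"
  by (auto simp add: alg_carrier_def alg_unit_def)

definition Iset :: "nat \<Rightarrow> (nat \<Rightarrow> nat) \<Rightarrow> (nat \<times> nat \<times> nat) set" where
  "Iset n m = Sigma {..n} (\<lambda>k. {..<m k} \<times> {..<m k})"

lemma finite_Iset: "finite (Iset n m)" unfolding Iset_def by auto

definition tr :: "(nat \<times> nat \<times> nat) set \<Rightarrow> alg \<Rightarrow> alg" where
  "tr T b = (\<lambda>k p q. if (k, p, q) \<in> T then b k p q else 0)"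

lemma st_add: "alg_state n m \<mu> \<Longrightarrow> a \<in> alg_carrier n m \<Longrightarrow> b \<in> alg_carrier n m \<Longrightarrow>
   \<mu> (alg_add a b) = \<mu> a + \<mu> b"
  unfolding alg_state_def by blast
lemma st_scale: "alg_state n m \<mu> \<Longrightarrow> a \<in> alg_carrier n m \<Longrightarrow> \<mu> (alg_scale c a) = c * \<mu> a"
  unfolding alg_state_def by blast
lemma st_one: "alg_state n m \<mu> \<Longrightarrow> \<mu> (alg_one n m) = 1"
  unfolding alg_state_def by blast
lemma st_pos: "alg_state n m \<mu> \<Longrightarrow> a \<in> alg_carrier n m \<Longrightarrow>
   \<mu> (alg_mult m (alg_star a) a) \<in> \<real> \<and> 0 \<le> Re (\<mu> (alg_mult m (alg_star a) a))"
  unfolding alg_state_def by blast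

lemma state_zero: assumes "alg_state n m \<mu>" shows "\<mu> alg_zero = 0"
proof -
  have "alg_scale 0 alg_zero = alg_zero" by (simp add: alg_scale_def alg_zero_def)
  then show ?thesis using st_scale[OF assms carrier_zero, where c=0] by simp
qed

lemma state_sub: assumes "alg_state n m \<mu>" "a \<in> alg_carrier n m" "b \<in> alg_carrier n m"
  shows "\<mu> (alg_sub a b) = \<mu> a - \<mu> b"
proof -
  have "alg_sub a b = alg_add a (alg_scale (-1) b)"
    by (simp add: alg_sub_def alg_add_def alg_scale_def)
  then show ?thesis using st_add[OF assms(1,2) carrier_scale[OF assms(3)]] st_scale[OF assms(1,3)] by simp
qed

lemma state_tr:
  assumes st: "alg_state n m \<mu>" and fin: "finite T"
  shows "T \<subseteq> Iset n m \<Longrightarrow> \<mu> (tr T b) = (\<Sum>(k,p,q)\<in>T. b k p q * \<mu> (alg_unit k p q))"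
  using fin
proof (induction T rule: finite_induct)
  case empty
  have "tr {} b = alg_zero" by (simp add: tr_def alg_zero_def)
  then show ?case using state_zero[OF st] by simp
next
  case (insert i T)
  obtain k p q where i: "i = (k, p, q)" by (cases i) auto
  have kpq: "k \<le> n" "p < m k" "q < m k" using insert(4) i by (auto simp: Iset_def)
  have trc: "tr T b \<in> alg_carrier n m"
    using insert(4) by (auto simp: tr_def alg_carrier_def Iset_def)
  have eq: "tr (insert i T) b = alg_add (alg_scale (b k p q) (alg_unit k p q)) (tr T b)"
    using insert(2) i by (auto simp: tr_def alg_add_def alg_scale_def alg_unit_def fun_eq_iff)
  have "\<mu> (tr (insert i T) b) = b k p q * \<mu> (alg_unit k p q) + \<mu> (tr T b)"
    unfolding eq using st_add[OF st carrier_scale[OF carrier_unit[of k n p m q, OF kpq]] trc]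
      st_scale[OF st carrier_unit[of k n p m q, OF kpq]] by simp
  moreover have "\<mu> (tr T b) = (\<Sum>(k,p,q)\<in>T. b k p q * \<mu> (alg_unit k p q))"
    using insert.IH insert.prems by blast
  moreover have "(\<Sum>(k,p,q)\<in>insert i T. b k p q * \<mu> (alg_unit k p q))
      = b k p q * \<mu> (alg_unit k p q) + (\<Sum>(k,p,q)\<in>T. b k p q * \<mu> (alg_unit k p q))"
    using insert(1,2) i by (simp only: sum.insert) simp
  ultimately show ?case by (simp only:)
qed

lemma tr_Iset: "b \<in> alg_carrier n m \<Longrightarrow> tr (Iset n m) b = b"
  by (auto simp: tr_def Iset_def alg_carrier_def fun_eq_iff)

lemma kmu_Iset: "kmu n m \<mu> = (\<Sum>(k,p,q)\<in>Iset n m. cmod (\<mu> (alg_unit k p q)))"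
  unfolding kmu_def Iset_def
  by (simp add: sum.Sigma sum.cartesian_product)

lemma kmu_nonneg: "0 \<le> kmu n m \<mu>"
  unfolding kmu_def by (auto intro!: sum_nonneg)

lemma state_bound:
  assumes st: "alg_state n m \<mu>" and b: "b \<in> alg_carrier n m"
  shows "cmod (\<mu> b) \<le> kmu n m \<mu> * alg_norm n m b"
proof -
  have "\<mu> b = (\<Sum>(k,p,q)\<in>Iset n m. b k p q * \<mu> (alg_unit k p q))"
    using state_tr[OF st finite_Iset subset_refl, where b=b] tr_Iset[OF b] by simp
  then have "cmod (\<mu> b) \<le> (\<Sum>(k,p,q)\<in>Iset n m. cmod (b k p q * \<mu> (alg_unit k p q)))"
    by (simp add: norm_sum case_prod_unfold)
  also have "\<dots> \<le> (\<Sum>(k,p,q)\<in>Iset n m. alg_norm n m b * cmod (\<mu> (alg_unit k p q)))"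
  proof (rule sum_mono)
    fix i assume "i \<in> Iset n m"
    then obtain k p q where "i = (k,p,q)" "k \<le> n" "p < m k" "q < m k" by (auto simp: Iset_def)
    then show "(case i of (k,p,q) \<Rightarrow> cmod (b k p q * \<mu> (alg_unit k p q)))
         \<le> (case i of (k,p,q) \<Rightarrow> alg_norm n m b * cmod (\<mu> (alg_unit k p q)))"
      using entry_le_alg_norm[of k n p m q b] by (simp add: norm_mult mult_right_mono)
  qed
  also have "\<dots> = kmu n m \<mu> * alg_norm n m b"
    by (simp add: kmu_Iset sum_distrib_left case_prod_unfold mult.commute)
  finally show ?thesis .
qed



definition contc :: "'x metric \<Rightarrow> nat \<Rightarrow> (nat \<Rightarrow> nat) \<Rightarrow> ('x \<Rightarrow> alg) \<Rightarrow> bool" where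
  "contc mX n m a \<longleftrightarrow> (\<forall>x\<in>mspace mX. \<forall>e>0. \<exists>\<delta>>0. \<forall>y\<in>mspace mX.
                        mdist mX x y < \<delta> \<longrightarrow> alg_norm n m (alg_sub (a y) (a x)) < e)"

lemma CXA_iff: "a \<in> CXA mX n m \<longleftrightarrow> (\<forall>x\<in>mspace mX. a x \<in> alg_carrier n m) \<and>
                    (\<forall>x. x \<notin> mspace mX \<longrightarrow> a x = alg_zero) \<and> contc mX n m a"
  by (simp add: CXA_def contc_def)

lemma CXA_carrier: "a \<in> CXA mX n m \<Longrightarrow> x \<in> mspace mX \<Longrightarrow> a x \<in> alg_carrier n m"
  by (simp add: CXA_def)

lemma contc_transfer:
  assumes ca: "contc mX n m a" and cb: "contc mX n m b" and C: "0 \<le> C"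
    and le: "\<And>x y. x \<in> mspace mX \<Longrightarrow> y \<in> mspace mX \<Longrightarrow>
       alg_norm n m (alg_sub (g y) (g x)) \<le> C * (alg_norm n m (alg_sub (a y) (a x)) + alg_norm n m (alg_sub (b y) (b x)))"
  shows "contc mX n m g"
  unfolding contc_def
proof (intro ballI allI impI)
  fix x e assume x: "x \<in> mspace mX" and e: "(0::real) < e"
  define e' where "e' = e / (2 * C + 1)"
  have e': "0 < e'" using e C by (simp add: e'_def)
  obtain d1 where d1: "d1 > 0" "\<forall>y\<in>mspace mX. mdist mX x y < d1 \<longrightarrow> alg_norm n m (alg_sub (a y) (a x)) < e'"
    using ca x e' unfolding contc_def by blast
  obtain d2 where d2: "d2 > 0" "\<forall>y\<in>mspace mX. mdist mX x y < d2 \<longrightarrow> alg_norm n m (alg_sub (b y) (b x)) < e'"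
    using cb x e' unfolding contc_def by blast
  have key: "C * (2 * e') < e"
  proof -
    have "C * (2 * e') = e * (2 * C) / (2 * C + 1)" using C by (simp add: e'_def field_simps)
    also have "\<dots> < e" using C e by (simp add: field_simps)
    finally show ?thesis .
  qed
  show "\<exists>\<delta>>0. \<forall>y\<in>mspace mX. mdist mX x y < \<delta> \<longrightarrow> alg_norm n m (alg_sub (g y) (g x)) < e"
  proof (intro exI[of _ "min d1 d2"] conjI ballI impI)
    show "0 < min d1 d2" using d1 d2 by simp
    fix y assume y: "y \<in> mspace mX" and dy: "mdist mX x y < min d1 d2"
    have "alg_norm n m (alg_sub (a y) (a x)) + alg_norm n m (alg_sub (b y) (b x)) \<le> 2 * e'"
      using d1 d2 y dy by fastforce
    then have "C * (alg_norm n m (alg_sub (a y) (a x)) + alg_norm n m (alg_sub (b y) (b x))) \<le> C * (2 * e')"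
      by (rule mult_left_mono[OF _ C])
    then show "alg_norm n m (alg_sub (g y) (g x)) < e" using le[OF x y] key by linarith
  qed
qed

lemma sub_self_scale: "alg_sub a a = (\<lambda>k p q. 0 * a k p q)"
  by (simp add: alg_sub_def)

lemma Sn_zero: "Sn n m (alg_sub a a) = 0"
  unfolding sub_self_scale Sn_scale by simp

lemma CXA_fadd: assumes "a \<in> CXA mX n m" "b \<in> CXA mX n m" shows "fadd a b \<in> CXA mX n m"
proof -
  have ca: "contc mX n m a" and cb: "contc mX n m b" using assms CXA_iff by blast+
  have "contc mX n m (fadd a b)"
  proof (rule contc_transfer[OF ca cb Kc_nonneg])
    fix x y
    have eq: "alg_sub (fadd a b y) (fadd a b x) = (\<lambda>k p q. alg_sub (a y) (a x) k p q + alg_sub (b y) (b x) k p q)"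
      by (simp add: fadd_def alg_sub_def alg_add_def fun_eq_iff algebra_simps)
    have "alg_norm n m (alg_sub (fadd a b y) (fadd a b x)) \<le> Sn n m (alg_sub (fadd a b y) (fadd a b x))"
      by (rule alg_norm_le_Sn)
    also have "\<dots> \<le> Sn n m (alg_sub (a y) (a x)) + Sn n m (alg_sub (b y) (b x))"
      unfolding eq by (rule Sn_add)
    also have "\<dots> \<le> Kc n m * alg_norm n m (alg_sub (a y) (a x)) + Kc n m * alg_norm n m (alg_sub (b y) (b x))"
      by (intro add_mono Sn_le_K)
    finally show "alg_norm n m (alg_sub (fadd a b y) (fadd a b x)) \<le> Kc n m * (alg_norm n m (alg_sub (a y) (a x)) + alg_norm n m (alg_sub (b y) (b x)))"
      by (simp add: distrib_left)
  qed
  then show ?thesis unfolding CXA_iff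
  proof (intro conjI ballI allI impI)
    fix x assume "x \<in> mspace mX"
    then show "fadd a b x \<in> alg_carrier n m" using assms by (simp add: fadd_def carrier_add CXA_carrier)
  next
    fix x assume "x \<notin> mspace mX"
    then show "fadd a b x = alg_zero" using assms by (simp add: fadd_def CXA_def alg_add_def alg_zero_def)
  qed
qed

lemma CXA_fscale: assumes "a \<in> CXA mX n m" shows "fscale c a \<in> CXA mX n m"
proof -
  have ca: "contc mX n m a" using assms CXA_iff by blast
  have "contc mX n m (fscale c a)"
  proof (rule contc_transfer[OF ca ca mult_nonneg_nonneg[OF norm_ge_zero Kc_nonneg, of c]])
    fix x y
    have eq: "alg_sub (fscale c a y) (fscale c a x) = (\<lambda>k p q. c * alg_sub (a y) (a x) k p q)"
      by (simp add: fscale_def alg_sub_def alg_scale_def fun_eq_iff algebra_simps)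
    have "alg_norm n m (alg_sub (fscale c a y) (fscale c a x)) \<le> Sn n m (alg_sub (fscale c a y) (fscale c a x))"
      by (rule alg_norm_le_Sn)
    also have "\<dots> = cmod c * Sn n m (alg_sub (a y) (a x))"
      unfolding eq by (rule Sn_scale)
    also have "\<dots> \<le> cmod c * (Kc n m * alg_norm n m (alg_sub (a y) (a x)))"
      by (intro mult_left_mono Sn_le_K) auto
    also have "\<dots> \<le> cmod c * Kc n m * (alg_norm n m (alg_sub (a y) (a x)) + alg_norm n m (alg_sub (a y) (a x)))"
      using alg_norm_nonneg[of n m "alg_sub (a y) (a x)"] Kc_nonneg[of n m]
      by (simp add: algebra_simps mult_nonneg_nonneg)
    finally show "alg_norm n m (alg_sub (fscale c a y) (fscale c a x)) \<le> cmod c * Kc n m * (alg_norm n m (alg_sub (a y) (a x)) + alg_norm n m (alg_sub (a y) (a x)))" .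
  qed
  then show ?thesis unfolding CXA_iff
  proof (intro conjI ballI allI impI)
    fix x assume "x \<in> mspace mX"
    then show "fscale c a x \<in> alg_carrier n m" using assms by (simp add: fscale_def carrier_scale CXA_carrier)
  next
    fix x assume "x \<notin> mspace mX"
    then show "fscale c a x = alg_zero" using assms by (simp add: fscale_def CXA_def alg_scale_def alg_zero_def)
  qed
qed

lemma CXA_fone: "fone mX n m \<in> CXA mX n m"
proof -
  have "contc mX n m (fone mX n m)"
    unfolding contc_def
  proof (intro ballI allI impI)
    fix x e assume x: "x \<in> mspace mX" and e: "(0::real) < e"
    show "\<exists>\<delta>>0. \<forall>y\<in>mspace mX. mdist mX x y < \<delta> \<longrightarrow> alg_norm n m (alg_sub (fone mX n m y) (fone mX n m x)) < e"
    proof (intro exI[of _ 1] conjI ballI impI)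
      fix y assume y: "y \<in> mspace mX"
      have "alg_norm n m (alg_sub (fone mX n m y) (fone mX n m x)) \<le> Sn n m (alg_sub (alg_one n m) (alg_one n m))"
        using alg_norm_le_Sn x y by (simp add: fone_def)
      then show "alg_norm n m (alg_sub (fone mX n m y) (fone mX n m x)) < e" using e Sn_zero by simp
    qed simp
  qed
  then show ?thesis unfolding CXA_iff by (auto simp: fone_def carrier_one)
qed

lemma Delta_CXA: "a \<in> CXA mX n m \<Longrightarrow> Delta mX n m \<mu> x a = \<mu> (a x)"
  by (simp add: Delta_def)


lemma state_Delta:
  assumes st: "alg_state n m \<mu>" and x: "x \<in> mspace mX"
  shows "cx_state mX n m (Delta mX n m \<mu> x)"
  unfolding cx_state_def
proof (intro conjI ballI allI impI)
  fix a b assume a: "a \<in> CXA mX n m" and b: "b \<in> CXA mX n m"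
  show "Delta mX n m \<mu> x (fadd a b) = Delta mX n m \<mu> x a + Delta mX n m \<mu> x b"
    using Delta_CXA[OF CXA_fadd[OF a b]] Delta_CXA[OF a] Delta_CXA[OF b]
      st_add[OF st CXA_carrier[OF a x] CXA_carrier[OF b x]] by (simp add: fadd_def)
next
  fix c and a assume a: "a \<in> CXA mX n m"
  show "Delta mX n m \<mu> x (fscale c a) = c * Delta mX n m \<mu> x a"
    using Delta_CXA[OF CXA_fscale[OF a]] Delta_CXA[OF a]
      st_scale[OF st CXA_carrier[OF a x]] by (simp add: fscale_def)
next
  fix a assume a: "a \<in> CXA mX n m"
  have "Delta mX n m \<mu> x (fmult m (fstar a) a) \<in> \<real> \<and> 0 \<le> Re (Delta mX n m \<mu> x (fmult m (fstar a) a))"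
  proof (cases "fmult m (fstar a) a \<in> CXA mX n m")
    case True
    then show ?thesis using Delta_CXA[OF True] st_pos[OF st CXA_carrier[OF a x]]
      by (simp add: fmult_def fstar_def)
  qed (simp add: Delta_def)
  then show "Delta mX n m \<mu> x (fmult m (fstar a) a) \<in> \<real>"
    "0 \<le> Re (Delta mX n m \<mu> x (fmult m (fstar a) a))" by auto
next
  show "Delta mX n m \<mu> x (fone mX n m) = 1"
    using Delta_CXA[OF CXA_fone, where \<mu>=\<mu> and x=x] st_one[OF st] x by (simp add: fone_def)
next
  fix a assume "a \<notin> CXA mX n m"
  then show "Delta mX n m \<mu> x a = 0" by (simp add: Delta_def)
qed

lemma mu_cont_bound:
  assumes st: "alg_state n m \<mu>" and a: "a \<in> CXA mX n m" and x: "x \<in> mspace mX" and y: "y \<in> mspace mX"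
  shows "cmod (\<mu> (a y) - \<mu> (a x)) \<le> kmu n m \<mu> * alg_norm n m (alg_sub (a y) (a x))"
  using state_sub[OF st CXA_carrier[OF a y] CXA_carrier[OF a x]]
    state_bound[OF st carrier_sub[OF CXA_carrier[OF a y] CXA_carrier[OF a x]]] by simp



lemma preimage_open:
  assumes st: "alg_state n m \<mu>" and a: "a \<in> CXA mX n m" and U: "open U"
  shows "openin (mtopology_of mX) {x \<in> mspace mX. \<mu> (a x) \<in> U}"
proof -
  interpret M: Metric_space "mspace mX" "mdist mX" by (rule Metric_space_mspace_mdist)
  have ca: "contc mX n m a" using a CXA_iff by blast
  show ?thesis unfolding mtopology_of_def M.openin_mtopology
  proof (intro conjI allI impI)
    show "{x \<in> mspace mX. \<mu> (a x) \<in> U} \<subseteq> mspace mX" by auto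
    fix x assume x: "x \<in> {x \<in> mspace mX. \<mu> (a x) \<in> U}"
    obtain eps where eps: "eps > 0" "ball (\<mu> (a x)) eps \<subseteq> U"
      using U x open_contains_ball by blast
    define e' where "e' = eps / (kmu n m \<mu> + 1)"
    have e': "e' > 0" using eps kmu_nonneg[of n m \<mu>] by (simp add: e'_def)
    have key: "kmu n m \<mu> * e' < eps"
    proof -
      have "kmu n m \<mu> * e' = eps * kmu n m \<mu> / (kmu n m \<mu> + 1)"
        using kmu_nonneg[of n m \<mu>] by (simp add: e'_def field_simps)
      also have "\<dots> < eps" using eps kmu_nonneg[of n m \<mu>] by (simp add: field_simps)
      finally show ?thesis .
    qed
    obtain d where d: "d > 0" "\<forall>y\<in>mspace mX. mdist mX x y < d \<longrightarrow> alg_norm n m (alg_sub (a y) (a x)) < e'"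
      using ca x e' unfolding contc_def by blast
    show "\<exists>r>0. M.mball x r \<subseteq> {x \<in> mspace mX. \<mu> (a x) \<in> U}"
    proof (intro exI[of _ d] conjI subsetI)
      fix y assume "y \<in> M.mball x d"
      then have y: "y \<in> mspace mX" "mdist mX x y < d" by auto
      have "cmod (\<mu> (a y) - \<mu> (a x)) \<le> kmu n m \<mu> * alg_norm n m (alg_sub (a y) (a x))"
        using mu_cont_bound[OF st a] x y by simp
      also have "\<dots> \<le> kmu n m \<mu> * e'"
        using d y by (intro mult_left_mono kmu_nonneg) auto
      finally have "dist (\<mu> (a x)) (\<mu> (a y)) < eps" using key by (simp add: dist_norm norm_minus_commute)
      then show "y \<in> {x \<in> mspace mX. \<mu> (a x) \<in> U}" using eps y by auto
    qed (use d in auto)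
  qed
qed

definition gdist :: "'x metric \<Rightarrow> nat \<Rightarrow> (nat \<Rightarrow> nat) \<Rightarrow> 'x \<Rightarrow> 'x \<Rightarrow> alg" where
  "gdist mX n m x0 = (\<lambda>z. if z \<in> mspace mX then alg_scale (complex_of_real (mdist mX x0 z)) (alg_one n m) else alg_zero)"

lemma mdist_rev_tri:
  assumes "x0 \<in> mspace mX" "x \<in> mspace mX" "y \<in> mspace mX"
  shows "\<bar>mdist mX x0 y - mdist mX x0 x\<bar> \<le> mdist mX x y"
  using mdist_triangle[of x0 mX x y] mdist_triangle[of x0 mX y x] mdist_commute[of mX x y] assms by linarith

lemma gdist_CXA: assumes x0: "x0 \<in> mspace mX" shows "gdist mX n m x0 \<in> CXA mX n m"
proof -
  have "contc mX n m (gdist mX n m x0)"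
    unfolding contc_def
  proof (intro ballI allI impI)
    fix x e assume x: "x \<in> mspace mX" and e: "(0::real) < e"
    define S1 where "S1 = Sn n m (alg_one n m)"
    have S1: "0 \<le> S1" unfolding S1_def Sn_def by (auto intro!: sum_nonneg)
    show "\<exists>\<delta>>0. \<forall>y\<in>mspace mX. mdist mX x y < \<delta> \<longrightarrow> alg_norm n m (alg_sub (gdist mX n m x0 y) (gdist mX n m x0 x)) < e"
    proof (intro exI[of _ "e / (S1 + 1)"] conjI ballI impI)
      show "0 < e / (S1 + 1)" using e S1 by simp
      fix y assume y: "y \<in> mspace mX" and dy: "mdist mX x y < e / (S1 + 1)"
      have eq: "alg_sub (gdist mX n m x0 y) (gdist mX n m x0 x)
          = (\<lambda>k p q. complex_of_real (mdist mX x0 y - mdist mX x0 x) * alg_one n m k p q)"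
        using x y by (simp add: gdist_def alg_sub_def alg_scale_def fun_eq_iff algebra_simps)
      have "alg_norm n m (alg_sub (gdist mX n m x0 y) (gdist mX n m x0 x))
          \<le> Sn n m (alg_sub (gdist mX n m x0 y) (gdist mX n m x0 x))" by (rule alg_norm_le_Sn)
      also have "\<dots> = \<bar>mdist mX x0 y - mdist mX x0 x\<bar> * S1"
        unfolding eq Sn_scale S1_def norm_of_real by (rule refl)
      also have "\<dots> \<le> mdist mX x y * S1"
        using mdist_rev_tri[OF x0 x y] S1 by (rule mult_right_mono)
      also have "\<dots> \<le> mdist mX x y * (S1 + 1)" by (simp add: mult_left_mono)
      also have "\<dots> < e" using dy S1 by (simp add: field_simps)
      finally show "alg_norm n m (alg_sub (gdist mX n m x0 y) (gdist mX n m x0 x)) < e" .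
    qed
  qed
  then show ?thesis unfolding CXA_iff
    by (auto simp: gdist_def carrier_scale carrier_one)
qed

lemma Delta_inj:
  assumes st: "alg_state n m \<mu>"
  shows "inj_on (Delta mX n m \<mu>) (mspace mX)"
proof (rule inj_onI)
  fix x y assume x: "x \<in> mspace mX" and y: "y \<in> mspace mX" and eq: "Delta mX n m \<mu> x = Delta mX n m \<mu> y"
  have g: "gdist mX n m x \<in> CXA mX n m" using gdist_CXA[OF x] .
  have "Delta mX n m \<mu> x (gdist mX n m x) = Delta mX n m \<mu> y (gdist mX n m x)" using eq by simp
  then have "\<mu> (gdist mX n m x x) = \<mu> (gdist mX n m x y)" using Delta_CXA[OF g] by simp
  then have "complex_of_real (mdist mX x x) * 1 = complex_of_real (mdist mX x y) * 1"
    using x y st_scale[OF st carrier_one] st_one[OF st] by (simp add: gdist_def)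
  moreover have "mdist mX x x = 0" using mdist_zero[of x mX x] x by simp
  ultimately have "mdist mX x y = 0" by simp
  then show "x = y" using mdist_zero[of x mX y] x y by simp
qed

lemma lip_bound:
  assumes st: "alg_state n m \<mu>" and N: "0 < N"
    and nrm: "\<forall>a\<in>alg_carrier n m. alg_norm n m a \<le> N * nn a"
    and x: "x \<in> mspace mX" and y: "y \<in> mspace mX"
    and a: "a \<in> CXA mX n m" and lip: "lipc mX nn a \<le> 1"
  shows "cmod (Delta mX n m \<mu> x a - Delta mX n m \<mu> y a) \<le> N * kmu n m \<mu> * mdist mX x y"
proof (cases "x = y")
  case True
  have "mdist mX y y = 0" using mdist_zero[of y mX y] y by simp
  then show ?thesis using True by simp
next
  case False
  have "mdist mX x y \<noteq> 0" using False x y mdist_zero[of x mX y] by simp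
  then have dpos: "0 < mdist mX x y" using mdist_nonneg[of mX x y] by linarith
  have "ereal (nn (alg_sub (a x) (a y)) / mdist mX x y) \<le> lipc mX nn a"
    using SUP_upper[of "(x,y)" "{(x, y). x \<in> mspace mX \<and> y \<in> mspace mX \<and> x \<noteq> y}"
      "\<lambda>xy. ereal (nn (alg_sub (a (fst xy)) (a (snd xy))) / mdist mX (fst xy) (snd xy))"] x y False
    unfolding lipc_def by simp
  then have "ereal (nn (alg_sub (a x) (a y)) / mdist mX x y) \<le> 1" using lip by (rule order_trans)
  then have "nn (alg_sub (a x) (a y)) / mdist mX x y \<le> 1" by simp
  then have nnle: "nn (alg_sub (a x) (a y)) \<le> mdist mX x y" using dpos by (simp add: divide_le_eq)
  have c: "alg_sub (a x) (a y) \<in> alg_carrier n m" using carrier_sub[OF CXA_carrier[OF a x] CXA_carrier[OF a y]] .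
  have "cmod (Delta mX n m \<mu> x a - Delta mX n m \<mu> y a) = cmod (\<mu> (alg_sub (a x) (a y)))"
    using Delta_CXA[OF a] state_sub[OF st CXA_carrier[OF a x] CXA_carrier[OF a y]] by simp
  also have "\<dots> \<le> kmu n m \<mu> * alg_norm n m (alg_sub (a x) (a y))" by (rule state_bound[OF st c])
  also have "\<dots> \<le> kmu n m \<mu> * (N * mdist mX x y)"
  proof (rule mult_left_mono[OF _ kmu_nonneg])
    have "alg_norm n m (alg_sub (a x) (a y)) \<le> N * nn (alg_sub (a x) (a y))" using nrm c by blast
    also have "\<dots> \<le> N * mdist mX x y" using nnle N by simp
    finally show "alg_norm n m (alg_sub (a x) (a y)) \<le> N * mdist mX x y" .
  qed
  finally show ?thesis by (simp add: ac_simps)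
qed

lemma mk_bound:
  assumes st: "alg_state n m \<mu>" and N: "0 < N"
    and nrm: "\<forall>a\<in>alg_carrier n m. alg_norm n m a \<le> N * nn a"
    and x: "x \<in> mspace mX" and y: "y \<in> mspace mX"
    and L: "\<And>a. L a \<le> 1 \<Longrightarrow> lipc mX nn a \<le> 1"
  shows "mk mX n m L (Delta mX n m \<mu> x) (Delta mX n m \<mu> y) \<le> ereal (N * kmu n m \<mu> * mdist mX x y)"
  unfolding mk_def
proof (rule Sup_least)
  fix z assume "z \<in> {ereal (cmod (Delta mX n m \<mu> x a - Delta mX n m \<mu> y a)) | a.
                             a \<in> CXA mX n m \<and> fstar a = a \<and> L a \<le> 1}"
  then obtain a where a: "a \<in> CXA mX n m" "L a \<le> 1"
    and z: "z = ereal (cmod (Delta mX n m \<mu> x a - Delta mX n m \<mu> y a))" by blast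
  show "z \<le> ereal (N * kmu n m \<mu> * mdist mX x y)"
    using lip_bound[OF st N nrm x y a(1) L[OF a(2)]] z by simp
qed



lemma weakstar_topspace:
  "topspace (weakstar mX n m) = {\<nu>. cx_state mX n m \<nu>}"
  unfolding weakstar_def topology_generated_by_topspace
proof (intro equalityI subsetI)
  fix \<nu> assume "\<nu> \<in> \<Union>{{\<nu>. cx_state mX n m \<nu> \<and> \<nu> a \<in> U} | a U. a \<in> CXA mX n m \<and> open U}"
  then show "\<nu> \<in> {\<nu>. cx_state mX n m \<nu>}" by auto
next
  fix \<nu> assume "\<nu> \<in> {\<nu>. cx_state mX n m \<nu>}"
  then have "\<nu> \<in> {\<nu>. cx_state mX n m \<nu> \<and> \<nu> (fone mX n m) \<in> UNIV}" by simp
  moreover have "{\<nu>. cx_state mX n m \<nu> \<and> \<nu> (fone mX n m) \<in> UNIV} \<in>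
     {{\<nu>. cx_state mX n m \<nu> \<and> \<nu> a \<in> U} | a U. a \<in> CXA mX n m \<and> open U}"
    using CXA_fone by blast
  ultimately show "\<nu> \<in> \<Union>{{\<nu>. cx_state mX n m \<nu> \<and> \<nu> a \<in> U} | a U. a \<in> CXA mX n m \<and> open U}"
    by blast
qed

lemma weakstar_open:
  assumes "a \<in> CXA mX n m" "open U"
  shows "openin (weakstar mX n m) {\<nu>. cx_state mX n m \<nu> \<and> \<nu> a \<in> U}"
  unfolding weakstar_def by (rule topology_generated_by_Basis) (use assms in blast)

lemma Delta_homeo:
  assumes cpt: "compact_space (mtopology_of mX)" and st: "alg_state n m \<mu>"
  shows "homeomorphic_map (mtopology_of mX)
           (subtopology (weakstar mX n m) (Delta mX n m \<mu> ` mspace mX)) (Delta mX n m \<mu>)"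
proof -
  let ?D = "Delta mX n m \<mu>"
  have img: "?D ` mspace mX \<subseteq> topspace (weakstar mX n m)"
    using state_Delta[OF st] by (auto simp: weakstar_topspace)
  have tsY: "topspace (subtopology (weakstar mX n m) (?D ` mspace mX)) = ?D ` mspace mX"
    using img by auto
  have cont: "continuous_map (mtopology_of mX) (weakstar mX n m) ?D"
    unfolding weakstar_def
  proof (rule continuous_on_generated_topo)
    fix V assume "V \<in> {{\<nu>. cx_state mX n m \<nu> \<and> \<nu> a \<in> U} | a U. a \<in> CXA mX n m \<and> open U}"
    then obtain a U where a: "a \<in> CXA mX n m" and U: "open U"
      and V: "V = {\<nu>. cx_state mX n m \<nu> \<and> \<nu> a \<in> U}" by blast
    have "?D -` V \<inter> topspace (mtopology_of mX) = {x \<in> mspace mX. \<mu> (a x) \<in> U}"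
      using state_Delta[OF st] Delta_CXA[OF a] by (auto simp: V)
    then show "openin (mtopology_of mX) (?D -` V \<inter> topspace (mtopology_of mX))"
      using preimage_open[OF st a U] by simp
  next
    show "?D ` topspace (mtopology_of mX) \<subseteq> \<Union>{{\<nu>. cx_state mX n m \<nu> \<and> \<nu> a \<in> U} | a U. a \<in> CXA mX n m \<and> open U}"
      using img unfolding weakstar_def topology_generated_by_topspace by simp
  qed
  have contY: "continuous_map (mtopology_of mX) (subtopology (weakstar mX n m) (?D ` mspace mX)) ?D"
    using cont by (auto simp: continuous_map_in_subtopology)
  have haus: "Hausdorff_space (subtopology (weakstar mX n m) (?D ` mspace mX))"
    unfolding Hausdorff_space_def tsY
  proof (intro allI impI)
    fix u v assume "u \<in> ?D ` mspace mX \<and> v \<in> ?D ` mspace mX \<and> u \<noteq> v"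
    then obtain x y where x: "x \<in> mspace mX" and y: "y \<in> mspace mX" and u: "u = ?D x" and v: "v = ?D y"
      and uv: "u \<noteq> v" by blast
    obtain a where ua: "u a \<noteq> v a" using uv by (auto simp: fun_eq_iff)
    have a: "a \<in> CXA mX n m" using ua u v by (auto simp: Delta_def split: if_splits)
    define r where "r = dist (u a) (v a) / 2"
    have r: "r > 0" using ua by (simp add: r_def)
    define U0 where "U0 = {\<nu>. cx_state mX n m \<nu> \<and> \<nu> a \<in> ball (u a) r}"
    define V0 where "V0 = {\<nu>. cx_state mX n m \<nu> \<and> \<nu> a \<in> ball (v a) r}"
    show "\<exists>U V. openin (subtopology (weakstar mX n m) (?D ` mspace mX)) U \<and>
               openin (subtopology (weakstar mX n m) (?D ` mspace mX)) V \<and> u \<in> U \<and> v \<in> V \<and> disjnt U V"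
    proof (intro exI conjI)
      show "openin (subtopology (weakstar mX n m) (?D ` mspace mX)) (?D ` mspace mX \<inter> U0)"
        unfolding U0_def by (rule openin_subtopology_Int2[OF weakstar_open[OF a open_ball]])
      show "openin (subtopology (weakstar mX n m) (?D ` mspace mX)) (?D ` mspace mX \<inter> V0)"
        unfolding V0_def by (rule openin_subtopology_Int2[OF weakstar_open[OF a open_ball]])
      show "u \<in> ?D ` mspace mX \<inter> U0" using x u r state_Delta[OF st x] by (auto simp: U0_def)
      show "v \<in> ?D ` mspace mX \<inter> V0" using y v r state_Delta[OF st y] by (auto simp: V0_def)
      show "disjnt (?D ` mspace mX \<inter> U0) (?D ` mspace mX \<inter> V0)"
      unfolding disjnt_iff proof (intro allI notI, elim conjE)
        fix w assume "w \<in> ?D ` mspace mX \<inter> U0" "w \<in> ?D ` mspace mX \<inter> V0"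
        then have "dist (u a) (w a) < r" "dist (v a) (w a) < r" by (auto simp: U0_def V0_def)
        then have "dist (u a) (v a) < 2 * r" using dist_triangle3[of "u a" "v a" "w a"] dist_commute[of "w a" "u a"] dist_commute[of "w a" "v a"] by linarith
        then show False by (simp add: r_def)
      qed
    qed
  qed
  show ?thesis
    by (rule continuous_imp_homeomorphic_map[OF contY cpt haus])
       (use tsY Delta_inj[OF st] in auto)
qed


theorem proposition3p6:
  fixes mX :: "'x metric" and n :: nat and m :: "nat \<Rightarrow> nat" and \<mu> :: "alg \<Rightarrow> complex"
  assumes "compact_space (mtopology_of mX)"
    and "\<forall>k\<le>n. 1 \<le> m k"
    and "alg_state n m \<mu>"
  shows "homeomorphic_map (mtopology_of mX)
           (subtopology (weakstar mX n m) (Delta mX n m \<mu> ` mspace mX)) (Delta mX n m \<mu>)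
       \<and> (\<forall>nn M N. is_norm_on n m nn \<and> 0 < M \<and> 0 < N \<and>
            (\<forall>a\<in>alg_carrier n m. M * nn a \<le> alg_norm n m a \<and> alg_norm n m a \<le> N * nn a) \<longrightarrow>
            (\<forall>x\<in>mspace mX. \<forall>y\<in>mspace mX.
               mk mX n m (L_CX mX n m nn) (Delta mX n m \<mu> x) (Delta mX n m \<mu> y)
                 \<le> ereal (N * kmu n m \<mu> * mdist mX x y)
             \<and> mk mX n m (L_C mX n m nn) (Delta mX n m \<mu> x) (Delta mX n m \<mu> y)
                 \<le> ereal (N * kmu n m \<mu> * mdist mX x y)
             \<and> (\<forall>\<nu>. cx_state mX n m \<nu> \<longrightarrow>
                  mk mX n m (L_st mX n m nn \<nu>) (Delta mX n m \<mu> x) (Delta mX n m \<mu> y)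
                    \<le> ereal (N * kmu n m \<mu> * mdist mX x y))))"
  proof (intro conjI allI impI ballI)
  show "homeomorphic_map (mtopology_of mX)
           (subtopology (weakstar mX n m) (Delta mX n m \<mu> ` mspace mX)) (Delta mX n m \<mu>)"
    by (rule Delta_homeo[OF assms(1) assms(3)])
next
  fix nn M N x y
  assume H: "is_norm_on n m nn \<and> 0 < M \<and> 0 < N \<and>
            (\<forall>a\<in>alg_carrier n m. M * nn a \<le> alg_norm n m a \<and> alg_norm n m a \<le> N * nn a)"
    and x: "x \<in> mspace mX" and y: "y \<in> mspace mX"
  have N: "0 < N" using H by blast
  have nrm: "\<forall>a\<in>alg_carrier n m. alg_norm n m a \<le> N * nn a" using H by blast
  show "mk mX n m (L_CX mX n m nn) (Delta mX n m \<mu> x) (Delta mX n m \<mu> y)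
                 \<le> ereal (N * kmu n m \<mu> * mdist mX x y)"
    by (rule mk_bound[OF assms(3) N nrm x y]) (simp add: L_CX_def)
  show "mk mX n m (L_C mX n m nn) (Delta mX n m \<mu> x) (Delta mX n m \<mu> y)
                 \<le> ereal (N * kmu n m \<mu> * mdist mX x y)"
    by (rule mk_bound[OF assms(3) N nrm x y]) (simp add: L_C_def)
  fix \<nu> assume "cx_state mX n m \<nu>"
  show "mk mX n m (L_st mX n m nn \<nu>) (Delta mX n m \<mu> x) (Delta mX n m \<mu> y)
                    \<le> ereal (N * kmu n m \<mu> * mdist mX x y)"
    by (rule mk_bound[OF assms(3) N nrm x y]) (simp add: L_st_def)
qed

end
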